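(* Consider Cobb--Douglas exchange economies with $n=2$ agents and $m=2$ commodities in which both agents hold a strictly positive amount of both commodities. Then the incentive ratio over this class of economies is $e^{1/e}$: for every such economy, every agent $i$ with true Cobb--Douglas utility $u_i$ and every Cobb--Douglas misreport $u_i'$, $$\frac{\max_{x'\in\mathcal{E}(u_i')}u_i(x_i')}{\min_{x\in\mathcal{E}(u_i)}u_i(x_i)}\le e^{1/e},$$ and this bound is tight.
   Context: An exchange economy with $n$ agents and $m$ commodities is a tuple $((u_i)_{i=1}^n,(e_i)_{i=1}^n)$, where $u_i:\mathbb{R}_+^m\to\mathbb{R}$ is agent $i$'s utility and $e_i\in\mathbb{R}_+^m$ its endowment; without loss of generality total endowment of each commodity is $1$. Given prices $p$, agent $i$'s demand is the set of maximizers of $u_i(x_i)$ subject to $p\cdot x_i\le p\cdot e_i$, $x_i\ge0$. A competitive equilibrium is a pair $(p,x)$, $p\in\mathbb{R}_+^m$, with markets clearing and each $x_i$ in agent $i$'s demand at $p$. With $u_{-i}$ and $e$ fixed, $\mathcal{E}(\tilde u_i)$ is the set of competitive equilibrium allocations when agent $i$ reports $\tilde u_i$ and all others report truthfully. The incentive ratio of a class of economies is the supremum over economies in the class, agents $i$ and admissible misreports $u_i'$ of $\max_{x'\in\mathcal{E}(u_i')}u_i(x_i')/\min_{x\in\mathcal{E}(u_i)}u_i(x_i)$ (misreported outcomes are evaluated by the true $u_i$). Cobb--Douglas utilities are $u(x)=\prod_{j=1}^m x_j^{\alpha_j}$ with $0\le\alpha_j\le1$, $\sum_j\alpha_j=1$.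 *)

theory Defs
  imports Complex_Main
begin

text \<open>Commodities are indexed by 0..m-1, agents by 0..n-1. A bundle is a function
  nat \<Rightarrow> real that is nonnegative on the commodities and zero elsewhere.\<close>

definition is_bundle :: "nat \<Rightarrow> (nat \<Rightarrow> real) \<Rightarrow> bool" where
  "is_bundle m x \<longleftrightarrow> (\<forall>j<m. 0 \<le> x j) \<and> (\<forall>j. m \<le> j \<longrightarrow> x j = 0)"

definition cd_param :: "nat \<Rightarrow> (nat \<Rightarrow> real) \<Rightarrow> bool" where
  "cd_param m \<alpha> \<longleftrightarrow> (\<forall>j<m. 0 \<le> \<alpha> j \<and> \<alpha> j \<le> 1) \<and> (\<Sum>j<m. \<alpha> j) = 1"

text \<open>Cobb--Douglas utility prod_j x_j^alpha_j, with the convention x^0 = 1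
  (Isabelle's powr has 0 powr 0 = 0, hence the case split).\<close>
definition cd_util :: "nat \<Rightarrow> (nat \<Rightarrow> real) \<Rightarrow> (nat \<Rightarrow> real) \<Rightarrow> real" where
  "cd_util m \<alpha> x = (\<Prod>j<m. if \<alpha> j = 0 then 1 else x j powr \<alpha> j)"

definition cost :: "nat \<Rightarrow> (nat \<Rightarrow> real) \<Rightarrow> (nat \<Rightarrow> real) \<Rightarrow> real" where
  "cost m p x = (\<Sum>j<m. p j * x j)"

definition demand :: "nat \<Rightarrow> ((nat \<Rightarrow> real) \<Rightarrow> real) \<Rightarrow> (nat \<Rightarrow> real) \<Rightarrow> (nat \<Rightarrow> real)
    \<Rightarrow> (nat \<Rightarrow> real) set" where
  "demand m u ei p = {x. is_bundle m x \<and> cost m p x \<le> cost m p ei \<and>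
      (\<forall>y. is_bundle m y \<and> cost m p y \<le> cost m p ei \<longrightarrow> u y \<le> u x)}"

definition comp_eq :: "nat \<Rightarrow> nat \<Rightarrow> (nat \<Rightarrow> (nat \<Rightarrow> real) \<Rightarrow> real) \<Rightarrow> (nat \<Rightarrow> nat \<Rightarrow> real)
    \<Rightarrow> (nat \<Rightarrow> real) \<Rightarrow> (nat \<Rightarrow> nat \<Rightarrow> real) \<Rightarrow> bool" where
  "comp_eq n m u e p x \<longleftrightarrow> is_bundle m p \<and> (\<forall>i. n \<le> i \<longrightarrow> x i = (\<lambda>_. 0)) \<and>
     (\<forall>j<m. (\<Sum>i<n. x i j) = (\<Sum>i<n. e i j)) \<and>
     (\<forall>i<n. x i \<in> demand m (u i) (e i) p)"

definition CE_alloc :: "nat \<Rightarrow> nat \<Rightarrow> (nat \<Rightarrow> (nat \<Rightarrow> real) \<Rightarrow> real) \<Rightarrow> (nat \<Rightarrow> nat \<Rightarrow> real)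
    \<Rightarrow> (nat \<Rightarrow> nat \<Rightarrow> real) set" where
  "CE_alloc n m u e = {x. \<exists>p. comp_eq n m u e p x}"

definition cd_utils :: "nat \<Rightarrow> (nat \<Rightarrow> nat \<Rightarrow> real) \<Rightarrow> nat \<Rightarrow> (nat \<Rightarrow> real) \<Rightarrow> real" where
  "cd_utils m \<alpha> = (\<lambda>k. cd_util m (\<alpha> k))"

definition cd_economy :: "nat \<Rightarrow> nat \<Rightarrow> (nat \<Rightarrow> nat \<Rightarrow> real) \<Rightarrow> (nat \<Rightarrow> nat \<Rightarrow> real) \<Rightarrow> bool" where
  "cd_economy n m \<alpha> e \<longleftrightarrow> (\<forall>i<n. cd_param m (\<alpha> i)) \<and> (\<forall>i<n. \<forall>j<m. 0 < e i j) \<and>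
     (\<forall>j<m. (\<Sum>i<n. e i j) = 1)"

end

theory Submission
  imports Defs
begin

lemma cdu2: "cd_util 2 \<alpha> y = (if \<alpha> 0 = 0 then 1 else y 0 powr \<alpha> 0) * (if \<alpha> 1 = 0 then 1 else y 1 powr \<alpha> 1)"
  by (simp add: cd_util_def numeral_2_eq_2 lessThan_Suc)
lemma cost2: "cost 2 p y = p 0 * y 0 + p 1 * y 1"
  by (simp add: cost_def numeral_2_eq_2 lessThan_Suc)
lemma cdp2: "cd_param 2 \<alpha> \<longleftrightarrow> 0 \<le> \<alpha> 0 \<and> \<alpha> 0 \<le> 1 \<and> \<alpha> 1 = 1 - \<alpha> 0"
  by (auto simp add: cd_param_def numeral_2_eq_2 lessThan_Suc less_Suc_eq)
lemma bundle2: "is_bundle 2 y \<longleftrightarrow> 0 \<le> y 0 \<and> 0 \<le> y 1 \<and> (\<forall>j\<ge>2. y j = 0)"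
  by (auto simp add: is_bundle_def numeral_2_eq_2 less_Suc_eq)

definition mk :: "real \<Rightarrow> real \<Rightarrow> nat \<Rightarrow> real" where
  "mk x0 x1 = (\<lambda>j. if j = 0 then x0 else if j = 1 then x1 else 0)"

lemma mk_simps[simp]: "mk x0 x1 0 = x0" "mk x0 x1 1 = x1" "mk x0 x1 (Suc 0) = x1" "j \<ge> 2 \<Longrightarrow> mk x0 x1 j = 0"
  by (auto simp: mk_def)

lemma amgm_le:
  fixes a U V :: real
  assumes "0<a" "a<1" "0<U" "0<V" "a*U + (1-a)*V \<le> 1"
  shows "a*ln U + (1-a)*ln V \<le> 0"
proof -
  have "ln U \<le> U - 1" "ln V \<le> V - 1" using ln_le_minus_one assms by auto
  hence "a*ln U \<le> a*(U-1)" "(1-a)*ln V \<le> (1-a)*(V-1)" using assms by (auto intro: mult_left_mono)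
  thus ?thesis using assms(5) by (simp add: algebra_simps)
qed

lemma amgm_eq:
  fixes a U V :: real
  assumes "0<a" "a<1" "0<U" "0<V" "a*U + (1-a)*V \<le> 1" "0 \<le> a*ln U + (1-a)*ln V"
  shows "U = 1 \<and> V = 1"
proof -
  have "ln U \<le> U - 1" "ln V \<le> V - 1" using ln_le_minus_one assms by auto
  hence h1: "a*(ln U - (U-1)) \<le> 0" "(1-a)*(ln V - (V-1)) \<le> 0" using assms
    by (auto simp: mult_le_0_iff)
  have "a*(ln U - (U-1)) + (1-a)*(ln V - (V-1)) \<ge> 0" using assms(5,6) by (simp add: algebra_simps)
  hence "a*(ln U - (U-1)) = 0" "(1-a)*(ln V - (V-1)) = 0" using h1 by linarith+
  hence "ln U = U - 1" "ln V = V - 1" using assms by auto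
  thus ?thesis using ln_eq_minus_one assms by auto
qed

lemma demand2: "y \<in> demand 2 u e p \<longleftrightarrow> (0 \<le> y 0 \<and> 0 \<le> y 1 \<and> (\<forall>j\<ge>2. y j = 0)) \<and>
   p 0 * y 0 + p 1 * y 1 \<le> cost 2 p e \<and>
   (\<forall>z. 0 \<le> z 0 \<and> 0 \<le> z 1 \<and> (\<forall>j\<ge>2. z j = 0) \<and> p 0 * z 0 + p 1 * z 1 \<le> cost 2 p e \<longrightarrow> u z \<le> u y)"
  unfolding demand_def by (simp add: bundle2 cost2[of p y] cost2[of p "_"] del: cost2)

lemma cd_mid:
  assumes "0 < a" "a < 1" "\<alpha> 0 = a" "\<alpha> 1 = 1 - a"
  shows "cd_util 2 \<alpha> y = y 0 powr a * y 1 powr (1 - a)"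
  using assms by (simp add: cdu2)

lemma dem_pos:
  assumes cp: "cd_param 2 \<alpha>" and p0: "0 < p 0" and p1: "0 < p 1" and w: "0 < cost 2 p e"
    and y: "y \<in> demand 2 (cd_util 2 \<alpha>) e p"
  shows "y 0 = \<alpha> 0 * cost 2 p e / p 0 \<and> y 1 = (1 - \<alpha> 0) * cost 2 p e / p 1"
proof -
  define w where "w = cost 2 p e"
  define a where "a = \<alpha> 0"
  have a1: "\<alpha> 1 = 1 - a" "0 \<le> a" "a \<le> 1" using cp by (auto simp: cdp2 a_def)
  have yb: "0 \<le> y 0" "0 \<le> y 1" and yc: "p 0 * y 0 + p 1 * y 1 \<le> w"
   and ymax: "\<And>z. 0 \<le> z 0 \<Longrightarrow> 0 \<le> z 1 \<Longrightarrow> (\<forall>j\<ge>2. z j = 0) \<Longrightarrow> p 0 * z 0 + p 1 * z 1 \<le> w \<Longrightarrow> cd_util 2 \<alpha> z \<le> cd_util 2 \<alpha> y"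
    using y by (auto simp: demand2 w_def)
  have wp: "0 < w" using w w_def by simp
  consider "a = 0" | "a = 1" | "0 < a \<and> a < 1" using a1 by linarith
  then show ?thesis
  proof cases
    case 1
    have "cd_util 2 \<alpha> (mk 0 (w/p 1)) \<le> cd_util 2 \<alpha> y" by (rule ymax) (use p1 wp in auto)
    hence "w / p 1 \<le> y 1" using 1 a1 yb p1 wp by (simp add: cdu2 a_def)
    hence h: "w \<le> p 1 * y 1" using p1 by (simp add: pos_divide_le_eq mult.commute)
    have "0 \<le> p 0 * y 0" using p0 yb by simp
    hence "p 0 * y 0 = 0" "p 1 * y 1 = w" using h yc by linarith+
    hence "y 0 = 0" "y 1 = w / p 1" using p0 p1 by (auto simp: eq_divide_eq mult.commute)
    thus ?thesis using 1 by (simp add: a_def w_def)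
  next
    case 2
    have "cd_util 2 \<alpha> (mk (w/p 0) 0) \<le> cd_util 2 \<alpha> y" by (rule ymax) (use p0 wp in auto)
    hence "w / p 0 \<le> y 0" using 2 a1 yb p0 wp by (simp add: cdu2 a_def)
    hence h: "w \<le> p 0 * y 0" using p0 by (simp add: pos_divide_le_eq mult.commute)
    have "0 \<le> p 1 * y 1" using p1 yb by simp
    hence "p 1 * y 1 = 0" "p 0 * y 0 = w" using h yc by linarith+
    hence "y 1 = 0" "y 0 = w / p 0" using p0 p1 by (auto simp: eq_divide_eq mult.commute)
    thus ?thesis using 2 by (simp add: a_def w_def)
  next
    case 3
    define X0 where "X0 = a * w / p 0"
    define X1 where "X1 = (1 - a) * w / p 1"
    have X0p: "0 < X0" and X1p: "0 < X1" using 3 p0 p1 wp by (auto simp: X0_def X1_def)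
    have ucd: "\<And>z. cd_util 2 \<alpha> z = z 0 powr a * z 1 powr (1 - a)"
      using 3 a1 by (intro cd_mid) (auto simp: a_def)
    have "cd_util 2 \<alpha> (mk X0 X1) \<le> cd_util 2 \<alpha> y"
      by (rule ymax) (use X0p X1p p0 p1 3 in \<open>auto simp: X0_def X1_def field_simps\<close>)
    hence le: "X0 powr a * X1 powr (1-a) \<le> y 0 powr a * y 1 powr (1-a)" by (simp add: ucd)
    have pos: "0 < X0 powr a * X1 powr (1-a)" using X0p X1p by simp
    have y0p: "0 < y 0"
    proof (rule ccontr)
      assume "\<not> 0 < y 0" hence "y 0 = 0" using yb by simp
      thus False using le pos 3 by simp
    qed
    have y1p: "0 < y 1"
    proof (rule ccontr)
      assume "\<not> 0 < y 1" hence "y 1 = 0" using yb by simp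
      thus False using le pos 3 by simp
    qed
    have "ln (X0 powr a * X1 powr (1-a)) \<le> ln (y 0 powr a * y 1 powr (1-a))"
      using le pos by simp
    hence "a * ln X0 + (1-a) * ln X1 \<le> a * ln (y 0) + (1-a) * ln (y 1)"
      using X0p X1p y0p y1p by (simp add: ln_mult ln_powr)
    hence lnle: "0 \<le> a * ln (y 0 / X0) + (1-a) * ln (y 1 / X1)"
      using X0p X1p y0p y1p by (simp add: ln_div algebra_simps)
    have "a * (y 0 / X0) + (1-a) * (y 1 / X1) = (p 0 * y 0 + p 1 * y 1) / w"
      using 3 p0 p1 wp by (simp add: X0_def X1_def field_simps)
    also have "\<dots> \<le> 1" using yc wp by simp
    finally have "y 0 / X0 = 1 \<and> y 1 / X1 = 1"
      using amgm_eq[OF _ _ _ _ _ lnle] 3 X0p X1p y0p y1p by auto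
    hence "y 0 = X0" "y 1 = X1" using X0p X1p by auto
    thus ?thesis by (simp add: X0_def X1_def a_def w_def)
  qed
qed

lemma dem_pos_in:
  assumes cp: "cd_param 2 \<alpha>" and p0: "0 < p 0" and p1: "0 < p 1" and w: "0 < cost 2 p e"
  shows "mk (\<alpha> 0 * cost 2 p e / p 0) ((1 - \<alpha> 0) * cost 2 p e / p 1) \<in> demand 2 (cd_util 2 \<alpha>) e p"
proof -
  define w where "w = cost 2 p e"
  define a where "a = \<alpha> 0"
  have a1: "\<alpha> 1 = 1 - a" "0 \<le> a" "a \<le> 1" using cp by (auto simp: cdp2 a_def)
  have wp: "0 < w" using w w_def by simp
  define X0 where "X0 = a * w / p 0"
  define X1 where "X1 = (1 - a) * w / p 1"
  have X0p: "0 \<le> X0" and X1p: "0 \<le> X1" using a1 p0 p1 wp by (auto simp: X0_def X1_def)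
  have cX: "p 0 * X0 + p 1 * X1 = w" using p0 p1 by (simp add: X0_def X1_def field_simps)
  have "\<forall>z. 0 \<le> z 0 \<and> 0 \<le> z 1 \<and> (\<forall>j\<ge>2. z j = 0) \<and> p 0 * z 0 + p 1 * z 1 \<le> w \<longrightarrow>
      cd_util 2 \<alpha> z \<le> cd_util 2 \<alpha> (mk X0 X1)"
  proof (intro allI impI, elim conjE)
    fix z :: "nat \<Rightarrow> real"
    assume z0: "0 \<le> z 0" and z1: "0 \<le> z 1" and zc: "p 0 * z 0 + p 1 * z 1 \<le> w"
    consider "a = 0" | "a = 1" | "0 < a \<and> a < 1" using a1 by linarith
    then show "cd_util 2 \<alpha> z \<le> cd_util 2 \<alpha> (mk X0 X1)"
    proof cases
      case 1
      have "p 1 * z 1 \<le> w" using zc p0 z0 by (smt (verit) mult_nonneg_nonneg)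
      hence "z 1 \<le> w / p 1" using p1 by (simp add: pos_le_divide_eq mult.commute)
      thus ?thesis using 1 a1 z1 X1p p1 wp by (simp add: cdu2 a_def X1_def)
    next
      case 2
      have "p 0 * z 0 \<le> w" using zc p1 z1 by (smt (verit) mult_nonneg_nonneg)
      hence "z 0 \<le> w / p 0" using p0 by (simp add: pos_le_divide_eq mult.commute)
      thus ?thesis using 2 a1 z0 X0p p0 wp by (simp add: cdu2 a_def X0_def)
    next
      case 3
      have ucd: "\<And>z. cd_util 2 \<alpha> z = z 0 powr a * z 1 powr (1 - a)"
        using 3 a1 by (intro cd_mid) (auto simp: a_def)
      have X0q: "0 < X0" and X1q: "0 < X1" using 3 p0 p1 wp by (auto simp: X0_def X1_def)
      show ?thesis
      proof (cases "z 0 = 0 \<or> z 1 = 0")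
        case True
        thus ?thesis using 3 by (auto simp: ucd)
      next
        case False
        hence zp: "0 < z 0" "0 < z 1" using z0 z1 by auto
        have "a * (z 0 / X0) + (1-a) * (z 1 / X1) = (p 0 * z 0 + p 1 * z 1) / w"
          using 3 p0 p1 wp by (simp add: X0_def X1_def field_simps)
        also have "\<dots> \<le> 1" using zc wp by simp
        finally have "a * ln (z 0 / X0) + (1-a) * ln (z 1 / X1) \<le> 0"
          using amgm_le 3 X0q X1q zp by auto
        hence "a * ln (z 0) + (1-a) * ln (z 1) \<le> a * ln X0 + (1-a) * ln X1"
          using X0q X1q zp by (simp add: ln_div algebra_simps)
        hence "ln (z 0 powr a * z 1 powr (1-a)) \<le> ln (X0 powr a * X1 powr (1-a))"
          using X0q X1q zp by (simp add: ln_mult ln_powr)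
        hence "z 0 powr a * z 1 powr (1-a) \<le> X0 powr a * X1 powr (1-a)"
          using X0q X1q zp by simp
        thus ?thesis by (simp add: ucd)
      qed
    qed
  qed
  thus ?thesis using X0p X1p cX
    unfolding demand2 by (simp add: X0_def X1_def a_def w_def)
qed

lemma zp0:
  assumes cp: "cd_param 2 \<alpha>" and pz: "p 0 = 0" and ap: "0 < \<alpha> 0" and e1: "0 < e 1"
    and pn: "0 \<le> p 1" and y: "y \<in> demand 2 (cd_util 2 \<alpha>) e p"
  shows False
proof -
  have yb: "0 \<le> y 0" "0 \<le> y 1"
   and ymax: "\<And>z. 0 \<le> z 0 \<Longrightarrow> 0 \<le> z 1 \<Longrightarrow> (\<forall>j\<ge>2. z j = 0) \<Longrightarrow> p 0 * z 0 + p 1 * z 1 \<le> cost 2 p e \<Longrightarrow> cd_util 2 \<alpha> z \<le> cd_util 2 \<alpha> y"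
    using y by (auto simp: demand2)
  define c where "c = (if \<alpha> 1 = 0 then 1 else e 1 powr \<alpha> 1)"
  have cp': "0 < c" using e1 by (simp add: c_def)
  have uy: "0 \<le> cd_util 2 \<alpha> y" by (simp add: cdu2)
  define T where "T = (cd_util 2 \<alpha> y / c + 1) powr (1 / \<alpha> 0)"
  have q: "0 < cd_util 2 \<alpha> y / c + 1" using uy cp' by (smt (verit) divide_nonneg_pos)
  have Tp: "0 < T" using q by (simp add: T_def)
  have "T powr \<alpha> 0 = cd_util 2 \<alpha> y / c + 1"
    unfolding T_def using ap q by (simp add: powr_powr)
  hence uz: "cd_util 2 \<alpha> (mk T (e 1)) = (cd_util 2 \<alpha> y / c + 1) * c"
    using ap by (simp add: cdu2 c_def)
  have "cd_util 2 \<alpha> (mk T (e 1)) \<le> cd_util 2 \<alpha> y"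
    by (rule ymax) (use Tp e1 pz in \<open>auto simp: cost2\<close>)
  moreover have "(cd_util 2 \<alpha> y / c + 1) * c = cd_util 2 \<alpha> y + c" using cp' by (simp add: field_simps)
  moreover have "(cd_util 2 \<alpha> y / c + 1) * c = c * (cd_util 2 \<alpha> y / c + 1)" by simp
  ultimately show False using uz cp' by linarith
qed

lemma zp1:
  assumes cp: "cd_param 2 \<alpha>" and pz: "p 1 = 0" and ap: "0 < \<alpha> 1" and e0: "0 < e 0"
    and pn: "0 \<le> p 0" and y: "y \<in> demand 2 (cd_util 2 \<alpha>) e p"
  shows False
proof -
  have yb: "0 \<le> y 0" "0 \<le> y 1"
   and ymax: "\<And>z. 0 \<le> z 0 \<Longrightarrow> 0 \<le> z 1 \<Longrightarrow> (\<forall>j\<ge>2. z j = 0) \<Longrightarrow> p 0 * z 0 + p 1 * z 1 \<le> cost 2 p e \<Longrightarrow> cd_util 2 \<alpha> z \<le> cd_util 2 \<alpha> y"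
    using y by (auto simp: demand2)
  define c where "c = (if \<alpha> 0 = 0 then 1 else e 0 powr \<alpha> 0)"
  have cp': "0 < c" using e0 by (simp add: c_def)
  have uy: "0 \<le> cd_util 2 \<alpha> y" by (simp add: cdu2)
  define T where "T = (cd_util 2 \<alpha> y / c + 1) powr (1 / \<alpha> 1)"
  have q: "0 < cd_util 2 \<alpha> y / c + 1" using uy cp' by (smt (verit) divide_nonneg_pos)
  have Tp: "0 < T" using q by (simp add: T_def)
  have "T powr \<alpha> 1 = cd_util 2 \<alpha> y / c + 1"
    unfolding T_def using ap q by (simp add: powr_powr)
  hence uz: "cd_util 2 \<alpha> (mk (e 0) T) = c * (cd_util 2 \<alpha> y / c + 1)"
    using ap by (simp add: cdu2 c_def)
  have "cd_util 2 \<alpha> (mk (e 0) T) \<le> cd_util 2 \<alpha> y"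
    by (rule ymax) (use Tp e0 pz in \<open>auto simp: cost2\<close>)
  moreover have "(cd_util 2 \<alpha> y / c + 1) * c = cd_util 2 \<alpha> y + c" using cp' by (simp add: field_simps)
  moreover have "(cd_util 2 \<alpha> y / c + 1) * c = c * (cd_util 2 \<alpha> y / c + 1)" by simp
  ultimately show False using uz cp' by linarith
qed

lemma z2_0:
  assumes cp: "cd_param 2 \<alpha>" and a0: "\<alpha> 0 = 0" and pz: "p 0 = 0" and p1: "0 < p 1"
    and e: "0 \<le> e 0" "0 \<le> e 1" and y: "y \<in> demand 2 (cd_util 2 \<alpha>) e p"
  shows "y 1 = e 1"
proof -
  have yb: "0 \<le> y 0" "0 \<le> y 1" and yc: "p 0 * y 0 + p 1 * y 1 \<le> cost 2 p e"
   and ymax: "\<And>z. 0 \<le> z 0 \<Longrightarrow> 0 \<le> z 1 \<Longrightarrow> (\<forall>j\<ge>2. z j = 0) \<Longrightarrow> p 0 * z 0 + p 1 * z 1 \<le> cost 2 p e \<Longrightarrow> cd_util 2 \<alpha> z \<le> cd_util 2 \<alpha> y"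
    using y by (auto simp: demand2)
  have a1: "\<alpha> 1 = 1" using cp a0 by (simp add: cdp2)
  have "cd_util 2 \<alpha> (mk (e 0) (e 1)) \<le> cd_util 2 \<alpha> y"
    by (rule ymax) (use e in \<open>auto simp: cost2\<close>)
  hence "e 1 \<le> y 1" using a0 a1 e yb by (simp add: cdu2)
  moreover have "y 1 \<le> e 1" using yc pz p1 by (simp add: cost2)
  ultimately show ?thesis by simp
qed

lemma z2_1:
  assumes cp: "cd_param 2 \<alpha>" and a0: "\<alpha> 1 = 0" and pz: "p 1 = 0" and p1: "0 < p 0"
    and e: "0 \<le> e 0" "0 \<le> e 1" and y: "y \<in> demand 2 (cd_util 2 \<alpha>) e p"
  shows "y 0 = e 0"
proof -
  have yb: "0 \<le> y 0" "0 \<le> y 1" and yc: "p 0 * y 0 + p 1 * y 1 \<le> cost 2 p e"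
   and ymax: "\<And>z. 0 \<le> z 0 \<Longrightarrow> 0 \<le> z 1 \<Longrightarrow> (\<forall>j\<ge>2. z j = 0) \<Longrightarrow> p 0 * z 0 + p 1 * z 1 \<le> cost 2 p e \<Longrightarrow> cd_util 2 \<alpha> z \<le> cd_util 2 \<alpha> y"
    using y by (auto simp: demand2)
  have a1: "\<alpha> 0 = 1" using cp a0 by (simp add: cdp2)
  have "cd_util 2 \<alpha> (mk (e 0) (e 1)) \<le> cd_util 2 \<alpha> y"
    by (rule ymax) (use e in \<open>auto simp: cost2\<close>)
  hence "e 0 \<le> y 0" using a0 a1 e yb by (simp add: cdu2)
  moreover have "y 0 \<le> e 0" using yc pz p1 by (simp add: cost2)
  ultimately show ?thesis by simp
qed

definition KK :: "real \<Rightarrow> real \<Rightarrow> real \<Rightarrow> real" where "KK g s t = t + g * (s - t)"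
definition DD :: "real \<Rightarrow> real \<Rightarrow> real \<Rightarrow> real" where "DD b g t = b * t + g * (1 - t)"
definition NN :: "real \<Rightarrow> real \<Rightarrow> real \<Rightarrow> real" where "NN b g s = (1 - s) * (1 - g) + s * (1 - b)"

definition eqo :: "real \<Rightarrow> real \<Rightarrow> real \<Rightarrow> real \<Rightarrow> real \<Rightarrow> real \<Rightarrow> bool" where
  "eqo b g s t y0 y1 \<longleftrightarrow>
    (0 < DD b g t \<and> 0 < NN b g s \<and> y0 = b * KK g s t / DD b g t \<and> y1 = (1 - b) * KK g s t / NN b g s)
  \<or> (b = 0 \<and> g = 0 \<and> y1 = t \<and> 0 \<le> y0 \<and> y0 \<le> 1)
  \<or> (b = 1 \<and> g = 1 \<and> y0 = s \<and> 0 \<le> y1 \<and> y1 \<le> 1)"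

lemma char:
  assumes cb: "cd_param 2 \<beta>" and cg: "cd_param 2 \<gamma>" and pb: "is_bundle 2 p"
    and y: "y \<in> demand 2 (cd_util 2 \<beta>) ei p" and z: "z \<in> demand 2 (cd_util 2 \<gamma>) ek p"
    and e: "0 < ei 0" "0 < ei 1" "0 < ek 0" "0 < ek 1" "ei 0 + ek 0 = 1" "ei 1 + ek 1 = 1"
    and cl: "y 0 + z 0 = 1" "y 1 + z 1 = 1"
  shows "eqo (\<beta> 0) (\<gamma> 0) (ei 0) (ei 1) (y 0) (y 1)"
proof -
  define b where "b = \<beta> 0"
  define g where "g = \<gamma> 0"
  define s where "s = ei 0"
  define t where "t = ei 1"
  have bb: "0 \<le> b" "b \<le> 1" "\<beta> 1 = 1 - b" using cb by (auto simp: cdp2 b_def)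
  have gg: "0 \<le> g" "g \<le> 1" "\<gamma> 1 = 1 - g" using cg by (auto simp: cdp2 g_def)
  have pp: "0 \<le> p 0" "0 \<le> p 1" using pb by (auto simp: bundle2)
  have yb: "0 \<le> y 0" "0 \<le> y 1" using y by (auto simp: demand2)
  have zb: "0 \<le> z 0" "0 \<le> z 1" using z by (auto simp: demand2)
  have ek: "ek 0 = 1 - s" "ek 1 = 1 - t" using e by (auto simp: s_def t_def)
  have st: "0 < s" "s < 1" "0 < t" "t < 1" using e by (auto simp: s_def t_def)
  consider "0 < p 0 \<and> 0 < p 1" | "p 0 = 0" | "p 1 = 0 \<and> 0 < p 0" using pp by linarith
  then show ?thesis
  proof cases
    case 1
    define wi where "wi = p 0 * s + p 1 * t"
    define wk where "wk = p 0 * (1 - s) + p 1 * (1 - t)"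
    have wi: "cost 2 p ei = wi" by (simp add: cost2 wi_def s_def t_def)
    have wk: "cost 2 p ek = wk" unfolding cost2 wk_def ek by simp
    have wip: "0 < wi" and wkp: "0 < wk" using 1 st by (auto simp: wi_def wk_def intro: add_pos_pos)
    have Y: "y 0 = b * wi / p 0" "y 1 = (1 - b) * wi / p 1"
      using dem_pos[OF cb _ _ _ y] 1 wi wip by (auto simp: b_def)
    have Z: "z 0 = g * wk / p 0" "z 1 = (1 - g) * wk / p 1"
      using dem_pos[OF cg _ _ _ z] 1 wk wkp by (auto simp: g_def)
    have eq0: "b * wi + g * wk = p 0" using cl(1) 1 unfolding Y Z by (simp add: field_simps)
    have PDN: "p 1 * DD b g t = p 0 * NN b g s"
      using eq0 unfolding DD_def NN_def wi_def wk_def by (simp add: algebra_simps)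
    have Dnn: "0 \<le> DD b g t" using bb gg st by (simp add: DD_def)
    have Dp: "0 < DD b g t"
    proof (rule ccontr)
      assume "\<not> 0 < DD b g t"
      hence "DD b g t = 0" using Dnn by simp
      moreover have "0 \<le> b * t" "0 \<le> g * (1 - t)" using bb gg st by auto
      ultimately have "b * t = 0" "g * (1 - t) = 0" unfolding DD_def by linarith+
      hence "b = 0" "g = 0" using st by auto
      hence "NN b g s = 1" by (simp add: NN_def)
      thus False using PDN \<open>DD b g t = 0\<close> 1 by simp
    qed
    have Np: "0 < NN b g s"
    proof -
      have "0 < p 1 * DD b g t" using 1 Dp by simp
      hence "0 < p 0 * NN b g s" using PDN by simp
      thus ?thesis using 1 by (simp add: zero_less_mult_iff)
    qed
    have KI: "s * DD b g t + t * NN b g s = KK g s t"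
      by (simp add: DD_def NN_def KK_def algebra_simps)
    have WD: "wi * DD b g t = p 0 * KK g s t"
    proof -
      have "wi * DD b g t = p 0 * s * DD b g t + t * (p 1 * DD b g t)" by (simp add: wi_def algebra_simps)
      also have "\<dots> = p 0 * s * DD b g t + t * (p 0 * NN b g s)" by (simp only: PDN)
      also have "\<dots> = p 0 * (s * DD b g t + t * NN b g s)" by (simp add: algebra_simps)
      finally show ?thesis using KI by simp
    qed
    have WN: "wi * NN b g s = p 1 * KK g s t"
    proof -
      have "p 0 * (wi * NN b g s) = wi * (p 0 * NN b g s)" by (simp add: algebra_simps)
      also have "\<dots> = wi * (p 1 * DD b g t)" by (simp only: PDN)
      also have "\<dots> = p 1 * (wi * DD b g t)" by simp
      also have "\<dots> = p 0 * (p 1 * KK g s t)" by (simp add: WD)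
      finally show ?thesis using 1 by simp
    qed
    have "y 0 = b * KK g s t / DD b g t"
    proof -
      have "y 0 * DD b g t = b * (wi * DD b g t) / p 0" unfolding Y by simp
      also have "\<dots> = b * KK g s t" using 1 by (simp add: WD)
      finally show ?thesis using Dp by (simp add: eq_divide_eq)
    qed
    moreover have "y 1 = (1 - b) * KK g s t / NN b g s"
    proof -
      have "y 1 * NN b g s = (1 - b) * (wi * NN b g s) / p 1" unfolding Y by simp
      also have "\<dots> = (1 - b) * KK g s t" using 1 by (simp add: WN)
      finally show ?thesis using Np by (simp add: eq_divide_eq)
    qed
    ultimately show ?thesis using Dp Np by (simp add: eqo_def b_def g_def s_def t_def)
  next
    case 2
    have b0: "b = 0"
    proof (rule ccontr)
      assume "b \<noteq> 0" hence "0 < \<beta> 0" using bb by (simp add: b_def)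
      thus False using zp0[OF cb 2 _ e(2) pp(2) y] by simp
    qed
    have g0: "g = 0"
    proof (rule ccontr)
      assume "g \<noteq> 0" hence "0 < \<gamma> 0" using gg by (simp add: g_def)
      thus False using zp0[OF cg 2 _ e(4) pp(2) z] by simp
    qed
    have p1: "0 < p 1"
    proof (rule ccontr)
      assume "\<not> 0 < p 1" hence "p 1 = 0" using pp by simp
      thus False using zp1[OF cb _ _ e(1) pp(1) y] bb b0 by simp
    qed
    have "y 1 = ei 1" using z2_0[OF cb _ 2 p1 _ _ y] b0 e by (simp add: b_def)
    moreover have "y 0 \<le> 1" using cl zb by linarith
    ultimately show ?thesis using b0 g0 yb by (simp add: eqo_def b_def g_def s_def t_def)
  next
    case 3
    have b1: "b = 1"
    proof (rule ccontr)
      assume "b \<noteq> 1" hence "0 < \<beta> 1" using bb by simp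
      thus False using zp1[OF cb _ _ e(1) pp(1) y] 3 by simp
    qed
    have g1: "g = 1"
    proof (rule ccontr)
      assume "g \<noteq> 1" hence "0 < \<gamma> 1" using gg by simp
      thus False using zp1[OF cg _ _ e(3) pp(1) z] 3 by simp
    qed
    have "y 0 = ei 0" using z2_1[OF cb _ _ _ _ _ y] b1 bb e 3 by simp
    moreover have "y 1 \<le> 1" using cl zb by linarith
    ultimately show ?thesis using b1 g1 yb by (simp add: eqo_def b_def g_def s_def t_def)
  qed
qed

lemma div_le:
  fixes n1 n2 D1 D2 K :: real
  assumes "0 < D1" "0 < D2" "0 \<le> K" "n1 * D2 \<le> n2 * D1"
  shows "n1 * K / D1 \<le> n2 * K / D2"
proof -
  have "n1 * D2 * K \<le> n2 * D1 * K" using assms by (intro mult_right_mono) auto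
  thus ?thesis using assms by (simp add: divide_simps algebra_simps)
qed

lemma CC:
  fixes a b g s t x0 x1 y0 y1 :: real
  assumes r: "0 \<le> a" "a \<le> 1" "0 \<le> b" "b \<le> 1" "0 \<le> g" "g \<le> 1" "0 < s" "s < 1" "0 < t" "t < 1"
    and Da: "0 < DD a g t" and Na: "0 < NN a g s"
    and x0: "x0 = a * KK g s t / DD a g t" and x1: "x1 = (1 - a) * KK g s t / NN a g s"
    and y: "eqo b g s t y0 y1"
  shows "0 \<le> y0 \<and> 0 \<le> y1 \<and> y0 \<le> 1 * KK g s t / DD a g t \<and> y1 \<le> 1 * KK g s t / NN a g s
     \<and> (a \<le> b \<longrightarrow> y1 \<le> x1) \<and> (b \<le> a \<longrightarrow> y0 \<le> x0)"
proof -
  define K where "K = KK g s t"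
  have Kp: "0 < K" unfolding K_def KK_def
  proof -
    have "t + g * (s - t) = t * (1 - g) + g * s" by (simp add: algebra_simps)
    moreover have "0 \<le> t * (1 - g)" "0 \<le> g * s" using r by auto
    moreover have "0 < t * (1 - g) \<or> 0 < g * s" using r by (cases "g = 1") auto
    ultimately show "0 < t + g * (s - t)" by linarith
  qed
  from y consider
    (M1) "0 < DD b g t" "0 < NN b g s" "y0 = b * K / DD b g t" "y1 = (1 - b) * K / NN b g s"
  | (M2) "b = 0" "g = 0" "y1 = t" "0 \<le> y0" "y0 \<le> 1"
  | (M3) "b = 1" "g = 1" "y0 = s" "0 \<le> y1" "y1 \<le> 1"
    unfolding eqo_def K_def by blast
  then show ?thesis
  proof cases
    case M1
    have c1: "b * DD a g t \<le> 1 * DD b g t"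
    proof -
      have "DD b g t - b * DD a g t = b * t * (1 - a) + g * (1 - t) * (1 - b)"
        by (simp add: DD_def algebra_simps)
      moreover have "0 \<le> b * t * (1 - a)" "0 \<le> g * (1 - t) * (1 - b)" using r by auto
      ultimately show ?thesis by linarith
    qed
    have c2: "(1 - b) * NN a g s \<le> 1 * NN b g s"
    proof -
      have "NN b g s - (1 - b) * NN a g s = b * ((1 - s) * (1 - g)) + s * (1 - b) * a"
        by (simp add: NN_def algebra_simps)
      moreover have "0 \<le> b * ((1 - s) * (1 - g))" "0 \<le> s * (1 - b) * a" using r by auto
      ultimately show ?thesis by linarith
    qed
    have c3: "a \<le> b \<Longrightarrow> (1 - b) * NN a g s \<le> (1 - a) * NN b g s"
    proof -
      assume ab: "a \<le> b"
      have "(1 - a) * NN b g s - (1 - b) * NN a g s = (b - a) * ((1 - s) * (1 - g))"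
        by (simp add: NN_def algebra_simps)
      moreover have "0 \<le> (b - a) * ((1 - s) * (1 - g))" using r ab by auto
      ultimately show ?thesis by linarith
    qed
    have c4: "b \<le> a \<Longrightarrow> b * DD a g t \<le> a * DD b g t"
    proof -
      assume ab: "b \<le> a"
      have "a * DD b g t - b * DD a g t = (a - b) * (g * (1 - t))"
        by (simp add: DD_def algebra_simps)
      moreover have "0 \<le> (a - b) * (g * (1 - t))" using r ab by auto
      ultimately show ?thesis by linarith
    qed
    have "0 \<le> y0" "0 \<le> y1" using M1 Kp r by auto
    moreover have "y0 \<le> 1 * K / DD a g t" unfolding M1 by (rule div_le) (use M1 Da Kp c1 in auto)
    moreover have "y1 \<le> 1 * K / NN a g s" unfolding M1 by (rule div_le) (use M1 Na Kp c2 in auto)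
    moreover have "a \<le> b \<longrightarrow> y1 \<le> x1" unfolding M1 x1 K_def[symmetric]
      using div_le[OF M1(2) Na _ c3] Kp by auto
    moreover have "b \<le> a \<longrightarrow> y0 \<le> x0" unfolding M1 x0 K_def[symmetric]
      using div_le[OF M1(1) Da _ c4] Kp by auto
    ultimately show ?thesis by (simp add: K_def)
  next
    case M2
    have KD: "K = t" "DD a g t = a * t" "NN a g s = 1 - s * a"
      using M2 by (simp_all add: K_def KK_def DD_def NN_def algebra_simps)
    have ap: "0 < a" using Da KD r by (simp add: zero_less_mult_iff)
    have "y0 \<le> 1 * K / DD a g t"
    proof -
      have "1 * K / DD a g t = 1 / a" using KD r by simp
      moreover have "1 \<le> 1 / a" using ap r by simp
      ultimately show ?thesis using M2 by linarith
    qed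
    moreover have "y1 \<le> 1 * K / NN a g s"
    proof -
      have "1 - s * a \<le> 1" using r by simp
      hence "t * (1 - s * a) \<le> t" using r by (simp add: mult_left_le)
      thus ?thesis using M2 KD Na by (simp add: le_divide_eq)
    qed
    moreover have "x0 = 1" using x0 KD ap r by (simp add: K_def[symmetric])
    ultimately show ?thesis using M2 ap r by (auto simp: K_def)
  next
    case M3
    have KD: "K = s" "DD a g t = a * t + (1 - t)" "NN a g s = s * (1 - a)"
      using M3 by (simp_all add: K_def KK_def DD_def NN_def algebra_simps)
    have a1: "a < 1" using Na KD r by (simp add: zero_less_mult_iff)
    have "y0 \<le> 1 * K / DD a g t"
    proof -
      have "a * t \<le> t" using r by (simp add: mult_left_le_one_le)
      hence "DD a g t \<le> 1" using KD by simp
      hence "s * DD a g t \<le> s" using r by (simp add: mult_left_le)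
      thus ?thesis using M3 KD Da by (simp add: le_divide_eq)
    qed
    moreover have "y1 \<le> 1 * K / NN a g s"
    proof -
      have "1 * K / NN a g s = 1 / (1 - a)" using KD r by simp
      moreover have "1 \<le> 1 / (1 - a)" using a1 r by simp
      ultimately show ?thesis using M3 by linarith
    qed
    moreover have "x1 = 1" using x1 KD a1 r by (simp add: K_def[symmetric])
    ultimately show ?thesis using M3 a1 r by (auto simp: K_def)
  qed
qed

lemma key_bound:
  fixes c :: real
  assumes "0 < c" "c \<le> 1"
  shows "(1 / c) powr c \<le> exp (1 / exp 1)"
proof -
  have "ln (1 / (c * exp 1)) \<le> 1 / (c * exp 1) - 1" using assms by (intro ln_le_minus_one) auto
  moreover have "ln (1 / (c * exp 1)) = ln (1 / c) - 1" using assms by (simp add: ln_div ln_mult)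
  ultimately have "ln (1 / c) \<le> 1 / (c * exp 1)" by simp
  hence "c * ln (1 / c) \<le> c * (1 / (c * exp 1))" using assms by (intro mult_left_mono) auto
  also have "\<dots> = 1 / exp 1" using assms by simp
  finally have "c * ln (1 / c) \<le> 1 / exp 1" .
  thus ?thesis using assms by (simp add: powr_def)
qed

lemma qb:
  fixes a x0 x1 y0 y1 :: real
  assumes "0 < a" "a < 1" "0 < x0" "0 < x1" "0 \<le> y0" "0 \<le> y1" "y0 \<le> x0 / a" "y1 \<le> x1"
  shows "y0 powr a * y1 powr (1 - a) \<le> exp (1 / exp 1) * (x0 powr a * x1 powr (1 - a))"
proof -
  have "y0 powr a \<le> (x0 / a) powr a" using assms by (intro powr_mono2) auto
  also have "(x0 / a) powr a = x0 powr a * (1 / a) powr a"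
    using assms by (simp add: powr_divide)
  finally have h1: "y0 powr a \<le> x0 powr a * (1 / a) powr a" .
  have h2: "y1 powr (1 - a) \<le> x1 powr (1 - a)" using assms by (intro powr_mono2) auto
  have "y0 powr a * y1 powr (1 - a) \<le> (x0 powr a * (1 / a) powr a) * x1 powr (1 - a)"
    using h1 h2 by (intro mult_mono) auto
  also have "\<dots> \<le> (x0 powr a * exp (1 / exp 1)) * x1 powr (1 - a)"
    using key_bound[of a] assms by (intro mult_right_mono mult_left_mono) auto
  finally show ?thesis by (simp add: algebra_simps)
qed

lemma qb':
  fixes a x0 x1 y0 y1 :: real
  assumes "0 < a" "a < 1" "0 < x0" "0 < x1" "0 \<le> y0" "0 \<le> y1" "y0 \<le> x0" "y1 \<le> x1 / (1 - a)"
  shows "y0 powr a * y1 powr (1 - a) \<le> exp (1 / exp 1) * (x0 powr a * x1 powr (1 - a))"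
proof -
  have "y1 powr (1 - a) * y0 powr (1 - (1 - a)) \<le> exp (1 / exp 1) * (x1 powr (1 - a) * x0 powr (1 - (1 - a)))"
    using assms by (intro qb) auto
  thus ?thesis by (simp add: algebra_simps)
qed



definition UU :: "real \<Rightarrow> real \<Rightarrow> real \<Rightarrow> real" where
  "UU a y0 y1 = (if a = 0 then 1 else y0 powr a) * (if 1 - a = 0 then 1 else y1 powr (1 - a))"

lemma KK_pos: "0 \<le> g \<Longrightarrow> g \<le> 1 \<Longrightarrow> 0 < s \<Longrightarrow> 0 < t \<Longrightarrow> 0 < KK g s t"
proof -
  assume r: "0 \<le> g" "g \<le> 1" "0 < s" "0 < t"
  have "t + g * (s - t) = t * (1 - g) + g * s" by (simp add: algebra_simps)
  moreover have "0 \<le> t * (1 - g)" "0 \<le> g * s" using r by auto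
  moreover have "0 < t * (1 - g) \<or> 0 < g * s" using r by (cases "g = 1") auto
  ultimately show "0 < KK g s t" unfolding KK_def by linarith
qed

lemma eqo_nonneg:
  assumes "eqo b g s t y0 y1" "0 \<le> b" "b \<le> 1" "0 \<le> g" "g \<le> 1" "0 < s" "0 < t"
  shows "0 \<le> y0 \<and> 0 \<le> y1"
proof -
  have K: "0 < KK g s t" using KK_pos assms by auto
  from assms(1) consider
    (M1) "0 < DD b g t" "0 < NN b g s" "y0 = b * KK g s t / DD b g t" "y1 = (1 - b) * KK g s t / NN b g s"
  | (M2) "y1 = t" "0 \<le> y0"
  | (M3) "y0 = s" "0 \<le> y1"
    unfolding eqo_def by blast
  then show ?thesis
  proof cases
    case M1
    have "0 \<le> b * KK g s t" "0 \<le> (1 - b) * KK g s t" using K assms by auto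
    thus ?thesis using M1 by simp
  qed (use assms in auto)
qed

lemma final:
  fixes a b g s t x0 x1 y0 y1 :: real
  assumes r: "0 \<le> a" "a \<le> 1" "0 \<le> b" "b \<le> 1" "0 \<le> g" "g \<le> 1" "0 < s" "s < 1" "0 < t" "t < 1"
    and x: "eqo a g s t x0 x1" and y: "eqo b g s t y0 y1"
  shows "UU a y0 y1 \<le> exp (1 / exp 1) * UU a x0 x1"
proof -
  have "0 < 1 / exp (1::real)" by simp
  hence e1: "1 \<le> exp (1 / exp (1::real))" using one_le_exp_iff[of "1 / exp 1"] by linarith
  have Kp: "0 < KK g s t" using KK_pos r by auto
  have yn: "0 \<le> y0" "0 \<le> y1" using eqo_nonneg[OF y] r by auto
  have xn: "0 \<le> x0" "0 \<le> x1" using eqo_nonneg[OF x] r by auto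
  consider "0 < a \<and> a < 1" | "a = 0" | "a = 1" using r by linarith
  then show ?thesis
  proof cases
    case 1
    hence T1: "0 < DD a g t" "0 < NN a g s" "x0 = a * KK g s t / DD a g t" "x1 = (1 - a) * KK g s t / NN a g s"
      using x by (auto simp: eqo_def)
    note C = CC[OF r T1 y]
    have xp: "0 < x0" "0 < x1" using T1 1 Kp by auto
    have U: "\<And>z0 z1. UU a z0 z1 = z0 powr a * z1 powr (1 - a)" using 1 by (simp add: UU_def)
    show ?thesis
    proof (cases "a \<le> b")
      case True
      have "1 * KK g s t / DD a g t = x0 / a" using T1 1 by simp
      hence "y0 \<le> x0 / a" "y1 \<le> x1" using C True by auto
      thus ?thesis unfolding U using xp yn 1 by (intro qb) auto
    next
      case False
      have "1 * KK g s t / NN a g s = x1 / (1 - a)" using T1 1 by simp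
      hence "y0 \<le> x0" "y1 \<le> x1 / (1 - a)" using C False by auto
      thus ?thesis unfolding U using xp yn 1 by (intro qb') auto
    qed
  next
    case 2
    have U: "\<And>z0 z1. 0 \<le> z1 \<Longrightarrow> UU 0 z0 z1 = z1" by (simp add: UU_def)
    have "y1 \<le> x1"
    proof -
      from x 2 consider "0 < DD a g t" "0 < NN a g s" "x0 = a * KK g s t / DD a g t" "x1 = (1 - a) * KK g s t / NN a g s"
        | "g = 0" "x1 = t" by (auto simp: eqo_def)
      then show ?thesis
      proof cases
        case 1
        note C = CC[OF r 1 y]
        thus ?thesis using 2 r by simp
      next
        case g0: 2
        from y consider "0 < NN b g s" "y1 = (1 - b) * KK g s t / NN b g s" | "y1 = t" | "g = 1"
          by (auto simp: eqo_def)
        then show ?thesis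
        proof cases
          case 1
          have NK: "NN b g s = 1 - s * b" "KK g s t = t" using g0 by (simp_all add: NN_def KK_def algebra_simps)
          have "(1 - b) * t \<le> t * (1 - s * b)"
          proof -
            have "1 - b \<le> 1 - s * b" using r by (simp add: mult_left_le_one_le)
            thus ?thesis using r by (simp add: mult.commute mult_left_mono)
          qed
          thus ?thesis using 1 g0 NK by (simp add: divide_le_eq)
        next
          case 2 thus ?thesis using g0 by simp
        next
          case 3 thus ?thesis using g0 by simp
        qed
      qed
    qed
    moreover have "x1 \<le> exp (1 / exp 1) * x1" using e1 xn by (simp add: mult_le_cancel_right1)
    ultimately show ?thesis using 2 yn xn U by simp
  next
    case 3
    have U: "\<And>z0 z1. 0 \<le> z0 \<Longrightarrow> UU 1 z0 z1 = z0" by (simp add: UU_def)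
    have "y0 \<le> x0"
    proof -
      from x 3 consider "0 < DD a g t" "0 < NN a g s" "x0 = a * KK g s t / DD a g t" "x1 = (1 - a) * KK g s t / NN a g s"
        | "g = 1" "x0 = s" by (auto simp: eqo_def)
      then show ?thesis
      proof cases
        case 1
        note C = CC[OF r 1 y]
        thus ?thesis using 3 r by simp
      next
        case g1: 2
        from y consider "0 < DD b g t" "y0 = b * KK g s t / DD b g t" | "y0 = s" | "g = 0"
          by (auto simp: eqo_def)
        then show ?thesis
        proof cases
          case 1
          have DK: "DD b g t = b * t + (1 - t)" "KK g s t = s" using g1 by (simp_all add: DD_def KK_def algebra_simps)
          have "b * s \<le> s * (b * t + (1 - t))"
          proof -
            have "b * (1 - t) \<le> 1 - t" using r by (simp add: mult_left_le_one_le)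
            hence "b \<le> b * t + (1 - t)" by (simp add: algebra_simps)
            thus ?thesis using r by (simp add: mult.commute mult_left_mono)
          qed
          thus ?thesis using 1 g1 DK by (simp add: divide_le_eq)
        next
          case 2 thus ?thesis using g1 by simp
        next
          case 3 thus ?thesis using g1 by simp
        qed
      qed
    qed
    moreover have "x0 \<le> exp (1 / exp 1) * x0" using e1 xn by (simp add: mult_le_cancel_right1)
    ultimately show ?thesis using 3 yn xn U by simp
  qed
qed

lemma cd_UU: "cd_param 2 \<alpha> \<Longrightarrow> cd_util 2 \<alpha> z = UU (\<alpha> 0) (z 0) (z 1)"
  by (simp add: cdu2 cdp2 UU_def)

lemma ce_eqo:
  assumes ce: "comp_eq 2 2 u e p x" and i: "i < 2" and k: "k = 1 - i"
    and ui: "u i = cd_util 2 \<beta>" and uk: "u k = cd_util 2 \<gamma>"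
    and cb: "cd_param 2 \<beta>" and cg: "cd_param 2 \<gamma>"
    and epos: "\<forall>i<2. \<forall>j<2. 0 < e i j" and esum: "\<forall>j<2. (\<Sum>i<2. e i j) = 1"
  shows "eqo (\<beta> 0) (\<gamma> 0) (e i 0) (e i 1) (x i 0) (x i 1)"
proof -
  have k2: "k < 2" using k i by simp
  have sum2: "\<And>f :: nat \<Rightarrow> real. (\<Sum>l<2. f l) = f i + f k"
    using i k by (auto simp: numeral_2_eq_2 lessThan_Suc less_Suc_eq)
  have pb: "is_bundle 2 p" and dems: "\<forall>l<2. x l \<in> demand 2 (u l) (e l) p"
    and clr: "\<forall>j<2. (\<Sum>l<2. x l j) = (\<Sum>l<2. e l j)"
    using ce by (auto simp: comp_eq_def)
  have y: "x i \<in> demand 2 (cd_util 2 \<beta>) (e i) p" using dems i ui by auto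
  have z: "x k \<in> demand 2 (cd_util 2 \<gamma>) (e k) p" using dems k2 uk by auto
  have cl: "\<And>j. j < 2 \<Longrightarrow> x i j + x k j = 1" "\<And>j. j < 2 \<Longrightarrow> e i j + e k j = 1"
    using clr esum by (auto simp: sum2)
  show ?thesis
    by (rule char[OF cb cg pb y z]) (use epos i k2 cl in auto)
qed

lemma part1:
  assumes ec: "cd_economy 2 2 \<alpha> e" and i: "i < 2" and cb: "cd_param 2 \<beta>"
    and x': "x' \<in> CE_alloc 2 2 ((cd_utils 2 \<alpha>)(i := cd_util 2 \<beta>)) e"
    and x: "x \<in> CE_alloc 2 2 (cd_utils 2 \<alpha>) e"
  shows "cd_util 2 (\<alpha> i) (x' i) \<le> exp (1 / exp 1) * cd_util 2 (\<alpha> i) (x i)"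
proof -
  define k where "k = 1 - i"
  have k2: "k < 2" "k \<noteq> i" using i unfolding k_def by presburger+
  have ca: "cd_param 2 (\<alpha> i)" and cg: "cd_param 2 (\<alpha> k)"
    and epos: "\<forall>i<2. \<forall>j<2. 0 < e i j" and esum: "\<forall>j<2. (\<Sum>i<2. e i j) = 1"
    using ec i k2 by (auto simp: cd_economy_def)
  obtain p' where p': "comp_eq 2 2 ((cd_utils 2 \<alpha>)(i := cd_util 2 \<beta>)) e p' x'"
    using x' by (auto simp: CE_alloc_def)
  obtain p where p: "comp_eq 2 2 (cd_utils 2 \<alpha>) e p x"
    using x by (auto simp: CE_alloc_def)
  have Y: "eqo (\<beta> 0) (\<alpha> k 0) (e i 0) (e i 1) (x' i 0) (x' i 1)"
    by (rule ce_eqo[OF p' i k_def _ _ cb cg epos esum]) (use k2 in \<open>auto simp: cd_utils_def\<close>)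
  have X: "eqo (\<alpha> i 0) (\<alpha> k 0) (e i 0) (e i 1) (x i 0) (x i 1)"
    by (rule ce_eqo[OF p i k_def _ _ ca cg epos esum]) (auto simp: cd_utils_def)
  have s: "0 < e i 0" "e i 0 < 1" "0 < e i 1" "e i 1 < 1"
  proof -
    have sum2: "\<And>f :: nat \<Rightarrow> real. (\<Sum>l<2. f l) = f i + f k"
      using i k2 by (auto simp: k_def numeral_2_eq_2 lessThan_Suc less_Suc_eq)
    have "e i 0 + e k 0 = 1" "e i 1 + e k 1 = 1" using esum by (auto simp: sum2)
    moreover have "0 < e i 0" "0 < e k 0" "0 < e i 1" "0 < e k 1" using epos i k2 by auto
    ultimately show "0 < e i 0" "e i 0 < 1" "0 < e i 1" "e i 1 < 1" by linarith+
  qed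
  have "UU (\<alpha> i 0) (x' i 0) (x' i 1) \<le> exp (1 / exp 1) * UU (\<alpha> i 0) (x i 0) (x i 1)"
    by (rule final[OF _ _ _ _ _ _ s X Y]) (use ca cb cg in \<open>auto simp: cdp2\<close>)
  thus ?thesis using ca by (simp add: cd_UU)
qed

lemma all2: "(\<forall>i<(2::nat). P i) \<longleftrightarrow> P 0 \<and> P 1"
  by (auto simp: numeral_2_eq_2 less_Suc_eq)
lemma sum2: "(\<Sum>i<(2::nat). f i) = (f 0 + f 1 :: real)"
  by (simp add: numeral_2_eq_2 lessThan_Suc)

lemma dem_10_in:
  assumes "p 0 = 1" "p 1 = 0" "0 \<le> y1" "0 \<le> e 0"
  shows "mk (e 0) y1 \<in> demand 2 (cd_util 2 (mk 1 0)) e p"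
  using assms by (auto simp: demand2 cost2 cdu2)

lemma choose_t:
  fixes c :: real
  assumes "c < exp (1 / exp 1)"
  shows "\<exists>t. 0 < t \<and> t < 1 \<and> c < (exp 1 - (exp 1 - 1) * t) powr (1 / exp 1)"
proof (cases "c \<le> 0")
  case True
  have "0 < exp 1 - (exp 1 - 1) * (1/2::real)" by (simp add: algebra_simps add_pos_pos)
  hence "0 < (exp 1 - (exp 1 - 1) * (1/2::real)) powr (1 / exp 1)" by simp
  hence "c < (exp 1 - (exp 1 - 1) * (1/2::real)) powr (1 / exp 1)" using True by linarith
  thus ?thesis by (intro exI[of _ "1/2"]) auto
next
  case False
  define E where "E = exp (1::real)"
  have E1: "1 < E" by (simp add: E_def)
  define L where "L = c powr E"
  have Lp: "0 < L" using False by (simp add: L_def)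
  have "c powr E < exp (1 / E) powr E" using False assms E1 by (intro powr_less_mono2) (auto simp: E_def)
  also have "exp (1 / E) powr E = E" using E1 by (simp add: powr_def E_def)
  finally have LE: "L < E" by (simp add: L_def)
  define t where "t = (E - L) / (2 * (E - 1))"
  have t0: "0 < t" using LE E1 by (simp add: t_def)
  have E2: "2 \<le> E" using exp_ge_add_one_self[of "1::real"] by (simp add: E_def)
  have t1: "t < 1" using LE E1 E2 Lp by (simp add: t_def field_simps)
  have "E - (E - 1) * t = (E + L) / 2" using E1 by (simp add: t_def field_simps)
  hence gt: "L < E - (E - 1) * t" using LE by simp
  have "c = L powr (1 / E)" using False E1 by (simp add: L_def powr_powr)
  also have "\<dots> < (E - (E - 1) * t) powr (1 / E)" using gt Lp E1 by (intro powr_less_mono2) auto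
  finally show ?thesis using t0 t1 by (auto simp: E_def)
qed

lemma example:
  fixes t :: real assumes t: "0 < t" "t < 1"
  defines "a \<equiv> 1 / exp (1::real)"
  defines "\<alpha> \<equiv> (\<lambda>l::nat. if l = 0 then mk a (1 - a) else mk 1 0)"
  defines "e \<equiv> (\<lambda>l::nat. if l = 0 then mk (1/2) t else mk (1/2) (1 - t))"
  defines "\<beta> \<equiv> mk 1 0"
  defines "x' \<equiv> (\<lambda>l::nat. if l = 0 then mk (1/2) 1 else if l = 1 then mk (1/2) 0 else (\<lambda>_. 0))"
  shows "cd_economy 2 2 \<alpha> e \<and> cd_param 2 \<beta> \<and> x' \<in> CE_alloc 2 2 ((cd_utils 2 \<alpha>)(0 := cd_util 2 \<beta>)) e
    \<and> CE_alloc 2 2 (cd_utils 2 \<alpha>) e \<noteq> {}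
    \<and> (\<forall>x\<in>CE_alloc 2 2 (cd_utils 2 \<alpha>) e. 0 < cd_util 2 (\<alpha> 0) (x 0) \<and>
         cd_util 2 (\<alpha> 0) (x' 0) = (exp 1 - (exp 1 - 1) * t) powr (1 / exp 1) * cd_util 2 (\<alpha> 0) (x 0))"
proof -
  have E1: "1 < exp (1::real)" by simp
  have a0: "0 < a" and a1: "a < 1" using E1 by (auto simp: a_def)
  have ca: "cd_param 2 (mk a (1 - a))" using a0 a1 by (simp add: cdp2)
  have c10: "cd_param 2 (mk 1 0)" by (simp add: cdp2)
  have epos: "\<forall>i<2. \<forall>j<2. 0 < e i j" and esum: "\<forall>j<2. (\<Sum>i<2. e i j) = 1"
    using t by (auto simp: all2 sum2 e_def)
  have econ: "cd_economy 2 2 \<alpha> e"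
    unfolding cd_economy_def using epos esum ca c10 by (auto simp: all2 \<alpha>_def)
  have ce': "x' \<in> CE_alloc 2 2 ((cd_utils 2 \<alpha>)(0 := cd_util 2 \<beta>)) e"
  proof -
    have d0: "mk (e 0 0) 1 \<in> demand 2 (cd_util 2 (mk 1 0)) (e 0) (mk 1 0)"
      by (rule dem_10_in) (use epos in \<open>auto simp: e_def\<close>)
    have d1: "mk (e 1 0) 0 \<in> demand 2 (cd_util 2 (mk 1 0)) (e 1) (mk 1 0)"
      by (rule dem_10_in) (use epos in \<open>auto simp: e_def\<close>)
    have "comp_eq 2 2 ((cd_utils 2 \<alpha>)(0 := cd_util 2 \<beta>)) e (mk 1 0) x'"
      unfolding comp_eq_def using d0 d1
      by (auto simp: all2 sum2 bundle2 x'_def e_def \<beta>_def \<alpha>_def cd_utils_def)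
    thus ?thesis by (auto simp: CE_alloc_def)
  qed
  define r where "r = (1 - a) / 2 / (a * t + (1 - t))"
  have Dp: "0 < a * t + (1 - t)" using a0 t by (simp add: add_pos_pos)
  have rp: "0 < r" using a1 Dp by (simp add: r_def)
  have rD: "r * (a * t + (1 - t)) = (1 - a) / 2" unfolding r_def using Dp by (metis less_irrefl nonzero_divide_mult_cancel_right times_divide_eq_left divide_divide_eq_left mult.commute nonzero_mult_div_cancel_left)
  define p where "p = mk 1 r"
  define w0 where "w0 = cost 2 p (e 0)"
  define w1 where "w1 = cost 2 p (e 1)"
  have w0: "w0 = 1/2 + r * t" and w1: "w1 = 1/2 + r * (1 - t)"
    by (simp_all add: w0_def w1_def cost2 p_def e_def)
  have w0p: "0 < w0" and w1p: "0 < w1" using rp t by (simp_all add: w0 w1 add_pos_nonneg)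
  have key: "(1 - a) * w0 = r"
  proof -
    have "(1 - a) * w0 = r * (a * t + (1 - t)) + (1 - a) * r * t" unfolding w0 rD by (simp add: algebra_simps)
    also have "\<dots> = r" by (simp add: algebra_simps)
    finally show ?thesis .
  qed
  have key2: "a * w0 + w1 = 1"
  proof -
    have "w0 + w1 = 1 + r" by (simp add: w0 w1 algebra_simps)
    thus ?thesis using key by (simp add: algebra_simps)
  qed
  define xx where "xx = (\<lambda>l::nat. if l = 0 then mk (a * w0 / 1) ((1 - a) * w0 / r)
      else if l = 1 then mk (1 * w1 / 1) ((1 - 1) * w1 / r) else (\<lambda>_. 0))"
  have D0: "xx 0 \<in> demand 2 (cd_util 2 (\<alpha> 0)) (e 0) p"
    using dem_pos_in[OF ca, of p "e 0"] rp w0p by (simp add: xx_def p_def w0_def \<alpha>_def)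
  have D1: "xx 1 \<in> demand 2 (cd_util 2 (\<alpha> 1)) (e 1) p"
    using dem_pos_in[OF c10, of p "e 1"] rp w1p by (simp add: xx_def p_def w1_def \<alpha>_def)
  have "comp_eq 2 2 (cd_utils 2 \<alpha>) e p xx"
    unfolding comp_eq_def using D0 D1 rp key key2 esum
    by (auto simp: all2 sum2 bundle2 xx_def p_def cd_utils_def)
  hence ne: "CE_alloc 2 2 (cd_utils 2 \<alpha>) e \<noteq> {}" by (auto simp: CE_alloc_def)
  have U0: "\<And>z. cd_util 2 (\<alpha> 0) z = z 0 powr a * z 1 powr (1 - a)"
    using a0 a1 by (simp add: cdu2 \<alpha>_def)
  have all: "\<forall>x\<in>CE_alloc 2 2 (cd_utils 2 \<alpha>) e. 0 < cd_util 2 (\<alpha> 0) (x 0) \<and>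
         cd_util 2 (\<alpha> 0) (x' 0) = (exp 1 - (exp 1 - 1) * t) powr (1 / exp 1) * cd_util 2 (\<alpha> 0) (x 0)"
  proof
    fix x assume "x \<in> CE_alloc 2 2 (cd_utils 2 \<alpha>) e"
    then obtain q where q: "comp_eq 2 2 (cd_utils 2 \<alpha>) e q x" by (auto simp: CE_alloc_def)
    have "eqo (mk a (1 - a) 0) (mk 1 0 0) (e 0 0) (e 0 1) (x 0 0) (x 0 1)"
      by (rule ce_eqo[OF q _ _ _ _ ca c10 epos esum]) (auto simp: cd_utils_def \<alpha>_def)
    hence "eqo a 1 (1/2) t (x 0 0) (x 0 1)" by (simp add: e_def)
    hence X: "x 0 0 = a * KK 1 (1/2) t / DD a 1 t" "x 0 1 = (1 - a) * KK 1 (1/2) t / NN a 1 (1/2)"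
      using a0 a1 by (auto simp: eqo_def)
    have KDN: "KK 1 (1/2) t = 1/2" "DD a 1 t = a * t + (1 - t)" "NN a 1 (1/2) = (1 - a) / 2"
      by (simp_all add: KK_def DD_def NN_def algebra_simps)
    have x01: "x 0 1 = 1" using X KDN a1 by simp
    define R where "R = (a * t + (1 - t)) / a"
    have x00: "x 0 0 = a / 2 / (a * t + (1 - t))" using X KDN by simp
    have x00p: "0 < x 0 0" using x00 a0 Dp by simp
    have half: "1/2 = R * x 0 0" using a0 Dp by (simp add: R_def x00)
    have Rp: "0 < R" using a0 Dp by (simp add: R_def)
    have RE: "R = exp 1 - (exp 1 - 1) * t" unfolding R_def a_def using E1 by (simp add: field_simps)
    have x01': "x 0 (Suc 0) = 1" using x01 by simp
    have ux: "cd_util 2 (\<alpha> 0) (x 0) = x 0 0 powr a" by (simp add: U0 x01')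
    have ux': "cd_util 2 (\<alpha> 0) (x' 0) = (1/2) powr a" by (simp add: U0 x'_def)
    have "(1/2::real) powr a = R powr a * x 0 0 powr a" unfolding half using Rp x00p by (simp add: powr_mult)
    thus "0 < cd_util 2 (\<alpha> 0) (x 0) \<and>
         cd_util 2 (\<alpha> 0) (x' 0) = (exp 1 - (exp 1 - 1) * t) powr (1 / exp 1) * cd_util 2 (\<alpha> 0) (x 0)"
      using ux ux' x00p RE by (simp add: a_def)
  qed
  show ?thesis using econ c10 ce' ne all by (simp add: \<beta>_def)
qed

theorem proposition2:
  shows "(\<forall>\<alpha> e i \<beta> x' x. cd_economy 2 2 \<alpha> e \<and> i < 2 \<and> cd_param 2 \<beta> \<and>
            x' \<in> CE_alloc 2 2 ((cd_utils 2 \<alpha>)(i := cd_util 2 \<beta>)) e \<and>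
            x \<in> CE_alloc 2 2 (cd_utils 2 \<alpha>) e \<longrightarrow>
            cd_util 2 (\<alpha> i) (x' i) \<le> exp (1 / exp 1) * cd_util 2 (\<alpha> i) (x i))
       \<and> (\<forall>c < exp (1 / exp 1). \<exists>\<alpha> e i \<beta> x'. cd_economy 2 2 \<alpha> e \<and> i < 2 \<and> cd_param 2 \<beta> \<and>
            x' \<in> CE_alloc 2 2 ((cd_utils 2 \<alpha>)(i := cd_util 2 \<beta>)) e \<and>
            CE_alloc 2 2 (cd_utils 2 \<alpha>) e \<noteq> {} \<and>
            (\<forall>x \<in> CE_alloc 2 2 (cd_utils 2 \<alpha>) e.
               c * cd_util 2 (\<alpha> i) (x i) < cd_util 2 (\<alpha> i) (x' i)))"
proof
  show "\<forall>\<alpha> e i \<beta> x' x. cd_economy 2 2 \<alpha> e \<and> i < 2 \<and> cd_param 2 \<beta> \<and>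
            x' \<in> CE_alloc 2 2 ((cd_utils 2 \<alpha>)(i := cd_util 2 \<beta>)) e \<and>
            x \<in> CE_alloc 2 2 (cd_utils 2 \<alpha>) e \<longrightarrow>
            cd_util 2 (\<alpha> i) (x' i) \<le> exp (1 / exp 1) * cd_util 2 (\<alpha> i) (x i)"
    using part1 by blast
next
  show "\<forall>c < exp (1 / exp 1). \<exists>\<alpha> e i \<beta> x'. cd_economy 2 2 \<alpha> e \<and> i < 2 \<and> cd_param 2 \<beta> \<and>
            x' \<in> CE_alloc 2 2 ((cd_utils 2 \<alpha>)(i := cd_util 2 \<beta>)) e \<and>
            CE_alloc 2 2 (cd_utils 2 \<alpha>) e \<noteq> {} \<and>
            (\<forall>x \<in> CE_alloc 2 2 (cd_utils 2 \<alpha>) e.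
               c * cd_util 2 (\<alpha> i) (x i) < cd_util 2 (\<alpha> i) (x' i))"
  proof (intro allI impI)
    fix c :: real assume c: "c < exp (1 / exp 1)"
    obtain t where t: "0 < t" "t < 1" and ct: "c < (exp 1 - (exp 1 - 1) * t) powr (1 / exp 1)"
      using choose_t[OF c] by blast
    define R where "R = (exp 1 - (exp 1 - 1) * t) powr (1 / exp 1)"
    have "\<exists>\<alpha> e \<beta> x'. cd_economy 2 2 \<alpha> e \<and> cd_param 2 \<beta> \<and> x' \<in> CE_alloc 2 2 ((cd_utils 2 \<alpha>)(0 := cd_util 2 \<beta>)) e
    \<and> CE_alloc 2 2 (cd_utils 2 \<alpha>) e \<noteq> {}
    \<and> (\<forall>x\<in>CE_alloc 2 2 (cd_utils 2 \<alpha>) e. 0 < cd_util 2 (\<alpha> 0) (x 0) \<and>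
         cd_util 2 (\<alpha> 0) (x' 0) = R * cd_util 2 (\<alpha> 0) (x 0))"
      unfolding R_def using example[OF t] by blast
    then obtain \<alpha> e \<beta> x' where H: "cd_economy 2 2 \<alpha> e" "cd_param 2 \<beta>"
      "x' \<in> CE_alloc 2 2 ((cd_utils 2 \<alpha>)(0 := cd_util 2 \<beta>)) e"
      "CE_alloc 2 2 (cd_utils 2 \<alpha>) e \<noteq> {}"
      "\<forall>x\<in>CE_alloc 2 2 (cd_utils 2 \<alpha>) e. 0 < cd_util 2 (\<alpha> 0) (x 0) \<and>
         cd_util 2 (\<alpha> 0) (x' 0) = R * cd_util 2 (\<alpha> 0) (x 0)" by blast
    have "\<forall>x \<in> CE_alloc 2 2 (cd_utils 2 \<alpha>) e. c * cd_util 2 (\<alpha> 0) (x 0) < cd_util 2 (\<alpha> 0) (x' 0)"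
    proof
      fix x assume "x \<in> CE_alloc 2 2 (cd_utils 2 \<alpha>) e"
      hence "0 < cd_util 2 (\<alpha> 0) (x 0)" "cd_util 2 (\<alpha> 0) (x' 0) = R * cd_util 2 (\<alpha> 0) (x 0)"
        using H(5) by auto
      moreover have "c < R" using ct by (simp add: R_def)
      ultimately show "c * cd_util 2 (\<alpha> 0) (x 0) < cd_util 2 (\<alpha> 0) (x' 0)"
        by (simp add: mult_strict_right_mono)
    qed
    thus "\<exists>\<alpha> e i \<beta> x'. cd_economy 2 2 \<alpha> e \<and> i < 2 \<and> cd_param 2 \<beta> \<and>
            x' \<in> CE_alloc 2 2 ((cd_utils 2 \<alpha>)(i := cd_util 2 \<beta>)) e \<and>
            CE_alloc 2 2 (cd_utils 2 \<alpha>) e \<noteq> {} \<and>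
            (\<forall>x \<in> CE_alloc 2 2 (cd_utils 2 \<alpha>) e.
               c * cd_util 2 (\<alpha> i) (x i) < cd_util 2 (\<alpha> i) (x' i))"
      using H by (intro exI[of _ \<alpha>] exI[of _ e] exI[of _ 0] exI[of _ \<beta>] exI[of _ x']) auto
  qed
qed

end
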